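(* Let $X$ and $Y$ be compact metric spaces with their Borel $\sigma$-algebras, $\nu$ a Borel probability on $X$ and $\pi$ a Borel probability on $X\times Y$. Then \[H^{\nu}(\pi)=-\sup\Big\{\int f\,d\pi\ :\ f:X\times Y\to\mathbb{R}\ \text{Lipschitz},\ \int e^{f(x,y)}\,d\nu(x)=1\ \forall y\in Y\Big\}.\]
   Context: $\mathcal{F}(\pi)$ is the set of measurable functions whose $\pi$-integral is well defined (not $+\infty-\infty$), and $H^{\nu}(\pi)=-\sup\{\int c\,d\pi:\ c\in\mathcal{F}(\pi),\ \int e^{c(x,y)}\,d\nu(x)=1\ \forall y\in Y\}$ (supremum over measurable functions). *)

theory Defs
  imports "HOL-Probability.Probability"
begin

definition ext_integral :: "'a measure \<Rightarrow> ('a \<Rightarrow> real) \<Rightarrow> ereal" where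
  "ext_integral M c =
     enn2ereal (\<integral>\<^sup>+ x. ennreal (c x) \<partial>M) - enn2ereal (\<integral>\<^sup>+ x. ennreal (- c x) \<partial>M)"

definition wd_functions :: "'a measure \<Rightarrow> ('a \<Rightarrow> real) set" where
  "wd_functions M = {c \<in> borel_measurable M.
      \<not> ((\<integral>\<^sup>+ x. ennreal (c x) \<partial>M) = \<infinity> \<and> (\<integral>\<^sup>+ x. ennreal (- c x) \<partial>M) = \<infinity>)}"

definition H_nu :: "'a measure \<Rightarrow> ('a \<times> 'b) measure \<Rightarrow> ereal" where
  "H_nu \<nu> \<pi> = - (SUP c \<in> {c \<in> wd_functions \<pi>.
        \<forall>y. (\<integral>\<^sup>+ x. ennreal (exp (c (x, y))) \<partial>\<nu>) = 1}. ext_integral \<pi> c)"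

end

theory Submission
  imports Defs
begin


lemma open_in_pair_borel:
  assumes cA: "compact (UNIV::'a::metric_space set)" and cB: "compact (UNIV::'b::metric_space set)"
  assumes W: "open (W::('a\<times>'b) set)"
  shows "W \<in> sets (borel \<Otimes>\<^sub>M (borel::'b measure))"
proof (cases "W = UNIV")
  case True
  have "space (borel \<Otimes>\<^sub>M (borel::'b measure)) = (UNIV::('a\<times>'b) set)" by (simp add: space_pair_measure)
  then show ?thesis using True sets.top by metis
next
  case False
  define C where "C = - W"
  have Cne: "C \<noteq> {}" using False C_def by auto
  have Ccl: "closed C" using W C_def by auto
  have cU: "compact (UNIV::('a\<times>'b) set)" using compact_Times[OF cA cB] by simp
  define K where "K n = {z. 1 / real (Suc n) \<le> infdist z C}" for n
  have Kc: "compact (K n)" for n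
  proof -
    have "closed (K n)" unfolding K_def
      by (intro closed_Collect_le continuous_intros continuous_on_infdist) auto
    then show ?thesis using cU compact_Int_closed[of UNIV "K n"] by simp
  qed
  obtain A B where AB: "\<And>p. p \<in> W \<Longrightarrow> open (A p) \<and> open (B p) \<and> p \<in> A p \<times> B p \<and> A p \<times> B p \<subseteq> W"
  proof -
    have "\<forall>p\<in>W. \<exists>A B. open A \<and> open B \<and> p \<in> A \<times> B \<and> A \<times> B \<subseteq> W"
    proof
      fix p assume "p \<in> W"
      from open_prod_elim[OF W this] obtain A B where "open A" "open B" "p \<in> A \<times> B" "A \<times> B \<subseteq> W" .
      then show "\<exists>A B. open A \<and> open B \<and> p \<in> A \<times> B \<and> A \<times> B \<subseteq> W" by blast
    qed
    from bchoice[OF this] obtain A where "\<forall>p\<in>W. \<exists>B. open (A p) \<and> open B \<and> p \<in> A p \<times> B \<and> A p \<times> B \<subseteq> W"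
      by blast
    from bchoice[OF this] obtain B where "\<forall>p\<in>W. open (A p) \<and> open (B p) \<and> p \<in> A p \<times> B p \<and> A p \<times> B p \<subseteq> W"
      by blast
    then show ?thesis using that by blast
  qed
  have KW: "K n \<subseteq> W" for n
  proof
    fix z assume "z \<in> K n"
    then have "1 / real (Suc n) \<le> infdist z C" unfolding K_def by simp
    moreover have "0 < 1 / real (Suc n)" by simp
    ultimately have "infdist z C > 0" by linarith
    show "z \<in> W"
    proof (rule ccontr)
      assume "z \<notin> W" then have "z \<in> C" using C_def by simp
      then have "infdist z C = 0" by simp
      with \<open>infdist z C > 0\<close> show False by simp
    qed
  qed
  have "\<forall>n. \<exists>T. T \<subseteq> W \<and> finite T \<and> K n \<subseteq> (\<Union>p\<in>T. A p \<times> B p)"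
  proof
    fix n
    have Kcov: "K n \<subseteq> (\<Union>p\<in>W. A p \<times> B p)"
    proof
      fix z assume "z \<in> K n"
      then have "z \<in> W" using KW by blast
      then have "z \<in> A z \<times> B z" using AB by blast
      then show "z \<in> (\<Union>p\<in>W. A p \<times> B p)" using \<open>z \<in> W\<close> by blast
    qed
    have op: "\<And>p. p \<in> W \<Longrightarrow> open (A p \<times> B p)"
    proof -
      fix p assume "p \<in> W" then have "open (A p)" "open (B p)" using AB by blast+
      then show "open (A p \<times> B p)" by (rule open_Times)
    qed
    obtain T where "T \<subseteq> W" "finite T" "K n \<subseteq> (\<Union>p\<in>T. A p \<times> B p)"
      by (rule compactE_image[OF Kc op Kcov])
    then show "\<exists>T. T \<subseteq> W \<and> finite T \<and> K n \<subseteq> (\<Union>p\<in>T. A p \<times> B p)" by blast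
  qed
  from choice[OF this] obtain T where T0: "\<forall>n. T n \<subseteq> W \<and> finite (T n) \<and> K n \<subseteq> (\<Union>p\<in>T n. A p \<times> B p)"
    by blast
  have T: "T n \<subseteq> W" "finite (T n)" "K n \<subseteq> (\<Union>p\<in>T n. A p \<times> B p)" for n using T0 by auto
  have eq: "W = (\<Union>n. \<Union>p\<in>T n. A p \<times> B p)"
  proof
    show "(\<Union>n. \<Union>p\<in>T n. A p \<times> B p) \<subseteq> W"
    proof (intro UN_least)
      fix n p assume "p \<in> T n" then have "p \<in> W" using T(1) by blast
      then show "A p \<times> B p \<subseteq> W" using AB by blast
    qed
    show "W \<subseteq> (\<Union>n. \<Union>p\<in>T n. A p \<times> B p)"
    proof
      fix z assume z: "z \<in> W"
      have "z \<notin> C" using z C_def by auto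
      then have "infdist z C > 0" using in_closed_iff_infdist_zero[OF Ccl Cne] infdist_nonneg[of z C] by auto
      then obtain n where "1 / real (Suc n) < infdist z C" using nat_approx_posE by blast
      then have "z \<in> K n" unfolding K_def by auto
      then show "z \<in> (\<Union>n. \<Union>p\<in>T n. A p \<times> B p)" using T(3)[of n] by blast
    qed
  qed
  have box: "A p \<times> B p \<in> sets (borel \<Otimes>\<^sub>M (borel::'b measure))" if "p \<in> W" for p
    using AB[OF that] by (intro pair_measureI) auto
  have box2: "\<And>n. \<forall>p\<in>T n. A p \<times> B p \<in> sets (borel \<Otimes>\<^sub>M (borel::'b measure))"
    using T(1) box by blast
  show ?thesis
    unfolding eq
  proof (intro sets.countable_nat_UN subsetI)
    fix X assume "X \<in> range (\<lambda>i. \<Union>p\<in>T i. A p \<times> B p)"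
    then obtain n where X: "X = (\<Union>p\<in>T n. A p \<times> B p)" by blast
    show "X \<in> sets (borel \<Otimes>\<^sub>M (borel::'b measure))"
      unfolding X using T(2)[of n] box2[of n] by (intro sets.finite_UN) simp_all
  qed
qed

lemma sets_pair_borel:
  assumes cA: "compact (UNIV::'a::metric_space set)" and cB: "compact (UNIV::'b::metric_space set)"
  shows "sets (borel \<Otimes>\<^sub>M (borel::'b measure)) = sets (borel :: ('a \<times> 'b) measure)"
proof
  have "(\<lambda>z. (fst z, snd z)) \<in> measurable (borel :: ('a \<times> 'b) measure) (borel \<Otimes>\<^sub>M (borel::'b measure))"
    by (intro measurable_Pair borel_measurable_continuous_onI continuous_intros)
  from measurable_sets[OF this] show "sets (borel \<Otimes>\<^sub>M (borel::'b measure)) \<subseteq> sets (borel :: ('a \<times> 'b) measure)"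
    by auto
  have "(\<lambda>z. z) \<in> borel_measurable (borel \<Otimes>\<^sub>M (borel::'b measure) :: ('a\<times>'b) measure)"
    by (rule borel_measurableI) (simp add: space_pair_measure open_in_pair_borel[OF cA cB])
  from measurable_sets[OF this] show "sets (borel :: ('a \<times> 'b) measure) \<subseteq> sets (borel \<Otimes>\<^sub>M (borel::'b measure))"
    by (auto simp: space_pair_measure)
qed



definition lipb :: "('c::metric_space \<Rightarrow> real) \<Rightarrow> bool" where
  "lipb f \<longleftrightarrow> (\<exists>L. L-lipschitz_on UNIV f) \<and> (\<exists>B. \<forall>z. \<bar>f z\<bar> \<le> B)"

definition bb :: "('c::metric_space \<Rightarrow> real) \<Rightarrow> bool" where
  "bb g \<longleftrightarrow> g \<in> borel_measurable borel \<and> (\<exists>B. \<forall>z. \<bar>g z\<bar> \<le> B)"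

definition Ap :: "'c::metric_space measure \<Rightarrow> 'c measure \<Rightarrow> ('c \<Rightarrow> real) \<Rightarrow> bool" where
  "Ap M1 M2 g \<longleftrightarrow> (\<forall>e>0. \<exists>f. lipb f \<and> (\<integral>z. \<bar>f z - g z\<bar> \<partial>M1) < e \<and> (\<integral>z. \<bar>f z - g z\<bar> \<partial>M2) < e)"

lemma lipb_bb: "lipb f \<Longrightarrow> bb f"
  unfolding lipb_def bb_def
  by (auto intro: borel_measurable_continuous_onI lipschitz_on_continuous_on)

lemma bb_const: "bb (\<lambda>z. c)"
  unfolding bb_def by auto

lemma bb_add: "bb f \<Longrightarrow> bb g \<Longrightarrow> bb (\<lambda>z. f z + g z)"
  unfolding bb_def
proof (elim conjE exE, intro conjI)
  fix B C assume "\<forall>z. \<bar>f z\<bar> \<le> B" "\<forall>z. \<bar>g z\<bar> \<le> C"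
  then show "\<exists>B. \<forall>z. \<bar>f z + g z\<bar> \<le> B"
    by (intro exI[of _ "B + C"] allI) (metis abs_triangle_ineq add_mono order_trans)
qed auto

lemma bb_mult: "bb f \<Longrightarrow> bb (\<lambda>z. a * f z)"
  unfolding bb_def
proof (elim conjE exE, intro conjI)
  fix B assume "\<forall>z. \<bar>f z\<bar> \<le> B"
  then show "\<exists>B. \<forall>z. \<bar>a * f z\<bar> \<le> B"
    by (intro exI[of _ "\<bar>a\<bar> * B"]) (auto simp: abs_mult intro: mult_left_mono)
qed auto

lemma bb_diff: "bb f \<Longrightarrow> bb g \<Longrightarrow> bb (\<lambda>z. f z - g z)"
  using bb_add[of f "\<lambda>z. (-1) * g z"] bb_mult[of g "-1"] by simp

lemma bb_abs: "bb f \<Longrightarrow> bb (\<lambda>z. \<bar>f z\<bar>)"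
  unfolding bb_def by auto

lemma bb_integrable:
  assumes "finite_measure M" "sets M = sets borel" "bb g"
  shows "integrable M g"
proof -
  interpret finite_measure M by fact
  from assms(3) obtain B where B: "\<And>z. \<bar>g z\<bar> \<le> B" and m: "g \<in> borel_measurable borel"
    unfolding bb_def by auto
  have "g \<in> borel_measurable M" using m by (simp add: measurable_cong_sets[OF assms(2) refl])
  then show ?thesis using B by (intro integrable_const_bound[where B=B]) auto
qed

lemma int_tri:
  assumes "finite_measure M" "sets M = sets borel" "bb f" "bb g" "bb h"
  shows "(\<integral>z. \<bar>f z - h z\<bar> \<partial>M) \<le> (\<integral>z. \<bar>f z - g z\<bar> \<partial>M) + (\<integral>z. \<bar>g z - h z\<bar> \<partial>M)"
proof -
  have i1: "integrable M (\<lambda>z. \<bar>f z - g z\<bar>)" "integrable M (\<lambda>z. \<bar>g z - h z\<bar>)"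
    "integrable M (\<lambda>z. \<bar>f z - h z\<bar>)"
    using assms by (auto intro!: bb_integrable bb_abs bb_diff)
  have "(\<integral>z. \<bar>f z - h z\<bar> \<partial>M) \<le> (\<integral>z. \<bar>f z - g z\<bar> + \<bar>g z - h z\<bar> \<partial>M)"
    using i1 by (intro integral_mono) auto
  also have "\<dots> = (\<integral>z. \<bar>f z - g z\<bar> \<partial>M) + (\<integral>z. \<bar>g z - h z\<bar> \<partial>M)"
    using i1 by (intro Bochner_Integration.integral_add)
  finally show ?thesis .
qed

locale two_fm =
  fixes M1 M2 :: "'c::metric_space measure"
  assumes fm1: "finite_measure M1" and fm2: "finite_measure M2"
    and s1: "sets M1 = sets borel" and s2: "sets M2 = sets borel"
begin

lemma Ap_lipb: "lipb f \<Longrightarrow> Ap M1 M2 f"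
  unfolding Ap_def by (intro allI impI exI[of _ f]) auto

lemma Ap_const: "Ap M1 M2 (\<lambda>z. c)"
  by (rule Ap_lipb) (auto simp: lipb_def intro: lipschitz_on_constant)

lemma Ap_add:
  assumes "Ap M1 M2 f" "Ap M1 M2 g" "bb f" "bb g"
  shows "Ap M1 M2 (\<lambda>z. f z + g z)"
  unfolding Ap_def
proof (intro allI impI)
  fix e :: real assume e: "e > 0"
  obtain f1 where f1: "lipb f1" "(\<integral>z. \<bar>f1 z - f z\<bar> \<partial>M1) < e/2" "(\<integral>z. \<bar>f1 z - f z\<bar> \<partial>M2) < e/2"
    using assms(1) e unfolding Ap_def by (meson half_gt_zero)
  obtain g1 where g1: "lipb g1" "(\<integral>z. \<bar>g1 z - g z\<bar> \<partial>M1) < e/2" "(\<integral>z. \<bar>g1 z - g z\<bar> \<partial>M2) < e/2"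
    using assms(2) e unfolding Ap_def by (meson half_gt_zero)
  have lb: "lipb (\<lambda>z. f1 z + g1 z)"
  proof -
    obtain L1 B1 L2 B2 where "L1-lipschitz_on UNIV f1" "\<forall>z. \<bar>f1 z\<bar> \<le> B1"
      "L2-lipschitz_on UNIV g1" "\<forall>z. \<bar>g1 z\<bar> \<le> B2"
      using f1(1) g1(1) unfolding lipb_def by auto
    then show ?thesis unfolding lipb_def
      by (intro conjI exI[of _ "L1+L2"] exI[of _ "B1+B2"] lipschitz_on_add) (auto intro: abs_triangle_ineq[THEN order_trans] add_mono)
  qed
  have key: "(\<integral>z. \<bar>(f1 z + g1 z) - (f z + g z)\<bar> \<partial>M) < e"
    if M: "finite_measure M" "sets M = sets borel"
      and a: "(\<integral>z. \<bar>f1 z - f z\<bar> \<partial>M) < e/2" and b: "(\<integral>z. \<bar>g1 z - g z\<bar> \<partial>M) < e/2" for M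
  proof -
    have i1: "integrable M (\<lambda>z. \<bar>f1 z - f z\<bar>)" "integrable M (\<lambda>z. \<bar>g1 z - g z\<bar>)"
      "integrable M (\<lambda>z. \<bar>(f1 z + g1 z) - (f z + g z)\<bar>)"
      using M assms f1(1) g1(1) lipb_bb by (auto intro!: bb_integrable bb_abs bb_diff bb_add)
    have "(\<integral>z. \<bar>(f1 z + g1 z) - (f z + g z)\<bar> \<partial>M) \<le> (\<integral>z. \<bar>f1 z - f z\<bar> + \<bar>g1 z - g z\<bar> \<partial>M)"
      using i1 by (intro integral_mono) auto
    also have "\<dots> = (\<integral>z. \<bar>f1 z - f z\<bar> \<partial>M) + (\<integral>z. \<bar>g1 z - g z\<bar> \<partial>M)"
      using i1 by (intro Bochner_Integration.integral_add) auto
    finally show ?thesis using a b by simp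
  qed
  show "\<exists>h. lipb h \<and> (\<integral>z. \<bar>h z - (f z + g z)\<bar> \<partial>M1) < e \<and> (\<integral>z. \<bar>h z - (f z + g z)\<bar> \<partial>M2) < e"
    using lb key[OF fm1 s1 f1(2) g1(2)] key[OF fm2 s2 f1(3) g1(3)] by blast
qed

lemma Ap_mult:
  assumes "Ap M1 M2 f" "bb f"
  shows "Ap M1 M2 (\<lambda>z. a * f z)"
proof (cases "a = 0")
  case True then show ?thesis using Ap_const[of 0] by simp
next
  case False
  show ?thesis unfolding Ap_def
  proof (intro allI impI)
    fix e :: real assume e: "e > 0"
    then have e': "e / \<bar>a\<bar> > 0" using False by auto
    obtain f1 where f1: "lipb f1" "(\<integral>z. \<bar>f1 z - f z\<bar> \<partial>M1) < e/\<bar>a\<bar>" "(\<integral>z. \<bar>f1 z - f z\<bar> \<partial>M2) < e/\<bar>a\<bar>"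
      using assms(1) e' unfolding Ap_def by meson
    have lb: "lipb (\<lambda>z. a * f1 z)"
    proof -
      obtain L1 B1 where "L1-lipschitz_on UNIV f1" "\<forall>z. \<bar>f1 z\<bar> \<le> B1"
        using f1(1) unfolding lipb_def by auto
      then show ?thesis unfolding lipb_def
        by (intro conjI exI[of _ "\<bar>a\<bar>*L1"] exI[of _ "\<bar>a\<bar>*B1"] lipschitz_on_cmult_real) (auto simp: abs_mult intro: mult_left_mono)
    qed
    have key: "(\<integral>z. \<bar>a * f1 z - a * f z\<bar> \<partial>M) < e"
      if M: "finite_measure M" "sets M = sets borel"
        and c: "(\<integral>z. \<bar>f1 z - f z\<bar> \<partial>M) < e/\<bar>a\<bar>" for M
    proof -
      have "(\<integral>z. \<bar>a * f1 z - a * f z\<bar> \<partial>M) = (\<integral>z. \<bar>a\<bar> * \<bar>f1 z - f z\<bar> \<partial>M)"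
        by (simp add: abs_mult right_diff_distrib[symmetric])
      also have "\<dots> = \<bar>a\<bar> * (\<integral>z. \<bar>f1 z - f z\<bar> \<partial>M)" by simp
      also have "\<dots> < \<bar>a\<bar> * (e/\<bar>a\<bar>)" using c False by (intro mult_strict_left_mono) auto
      finally show ?thesis using False by simp
    qed
    show "\<exists>h. lipb h \<and> (\<integral>z. \<bar>h z - a * f z\<bar> \<partial>M1) < e \<and> (\<integral>z. \<bar>h z - a * f z\<bar> \<partial>M2) < e"
      using lb key[OF fm1 s1 f1(2)] key[OF fm2 s2 f1(3)] by blast
  qed
qed

lemma Ap_lim:
  assumes g: "bb g" and h: "\<And>k. bb (h k)" "\<And>k. Ap M1 M2 (h k)"
    and lim: "\<And>z. (\<lambda>k. h k z) \<longlonglongrightarrow> g z" and bnd: "\<And>k z. \<bar>h k z\<bar> \<le> B"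
  shows "Ap M1 M2 g"
  unfolding Ap_def
proof (intro allI impI)
  fix e :: real assume e: "e > 0"
  obtain Bg where Bg: "\<And>z. \<bar>g z\<bar> \<le> Bg" using g unfolding bb_def by auto
  have conv: "(\<lambda>k. \<integral>z. \<bar>h k z - g z\<bar> \<partial>M) \<longlonglongrightarrow> 0"
    if M: "finite_measure M" "sets M = sets borel" for M
  proof -
    interpret finite_measure M by fact
    have mc: "\<And>f. f \<in> borel_measurable borel \<Longrightarrow> f \<in> borel_measurable M"
      by (simp add: measurable_cong_sets[OF M(2) refl])
    have "(\<lambda>k. \<integral>z. \<bar>h k z - g z\<bar> \<partial>M) \<longlonglongrightarrow> (\<integral>z. 0 \<partial>M)"
    proof (rule integral_dominated_convergence[where w="\<lambda>z. B + Bg"])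
      show "(\<lambda>z. 0::real) \<in> borel_measurable M" by simp
      show "(\<lambda>z. \<bar>h k z - g z\<bar>) \<in> borel_measurable M" for k
        using bb_abs[OF bb_diff[OF h(1) g]] unfolding bb_def by (auto intro: mc)
      show "integrable M (\<lambda>z. B + Bg)" by simp
      show "AE z in M. (\<lambda>k. \<bar>h k z - g z\<bar>) \<longlonglongrightarrow> 0"
        using lim by (intro AE_I2) (metis LIM_zero tendsto_rabs_zero)
      show "AE z in M. norm \<bar>h k z - g z\<bar> \<le> B + Bg" for k
        using bnd Bg by (intro AE_I2) (smt (verit) real_norm_def)
    qed
    then show ?thesis by simp
  qed
  have ev: "\<forall>\<^sub>F k in sequentially. (\<integral>z. \<bar>h k z - g z\<bar> \<partial>M1) < e/2 \<and> (\<integral>z. \<bar>h k z - g z\<bar> \<partial>M2) < e/2"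
    using order_tendstoD(2)[OF conv[OF fm1 s1], of "e/2"] order_tendstoD(2)[OF conv[OF fm2 s2], of "e/2"] e
    by (auto intro: eventually_conj)
  then obtain k where k: "(\<integral>z. \<bar>h k z - g z\<bar> \<partial>M1) < e/2" "(\<integral>z. \<bar>h k z - g z\<bar> \<partial>M2) < e/2"
    by (auto simp: eventually_sequentially)
  obtain f where f: "lipb f" "(\<integral>z. \<bar>f z - h k z\<bar> \<partial>M1) < e/2" "(\<integral>z. \<bar>f z - h k z\<bar> \<partial>M2) < e/2"
    using h(2)[of k] e unfolding Ap_def by (meson half_gt_zero)
  have "(\<integral>z. \<bar>f z - g z\<bar> \<partial>M1) < e"
    using int_tri[OF fm1 s1 lipb_bb[OF f(1)] h(1)[of k] g] f(2) k(1) by simp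
  moreover have "(\<integral>z. \<bar>f z - g z\<bar> \<partial>M2) < e"
    using int_tri[OF fm2 s2 lipb_bb[OF f(1)] h(1)[of k] g] f(3) k(2) by simp
  ultimately show "\<exists>f. lipb f \<and> (\<integral>z. \<bar>f z - g z\<bar> \<partial>M1) < e \<and> (\<integral>z. \<bar>f z - g z\<bar> \<partial>M2) < e"
    using f(1) by blast
qed

lemma Ap_sum:
  assumes "finite S" "\<And>i. i \<in> S \<Longrightarrow> Ap M1 M2 (f i) \<and> bb (f i)"
  shows "Ap M1 M2 (\<lambda>z. \<Sum>i\<in>S. f i z) \<and> bb (\<lambda>z. \<Sum>i\<in>S. f i z)"
  using assms
proof (induction S rule: finite_induct)
  case empty then show ?case using Ap_const[of 0] bb_const[of 0] by simp
next
  case (insert x F)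
  then show ?case using Ap_add[of "f x" "\<lambda>z. \<Sum>i\<in>F. f i z"] bb_add[of "f x" "\<lambda>z. \<Sum>i\<in>F. f i z"]
    by simp
qed

end

context two_fm begin

lemma bb_indicator: "A \<in> sets borel \<Longrightarrow> bb (indicator A :: 'c \<Rightarrow> real)"
  unfolding bb_def by (auto intro!: exI[of _ 1] simp: indicator_def)

lemma Ap_open:
  assumes U: "open (U::'c set)"
  shows "Ap M1 M2 (indicator U)"
proof (cases "U = UNIV")
  case True then show ?thesis using Ap_const[of 1] by simp
next
  case False
  define C where "C = - U"
  have Cne: "C \<noteq> {}" and Ccl: "closed C" using False U C_def by auto
  define h where "h k z = min 1 (real k * infdist z C)" for k z
  have lip: "lipb (h k)" for k
    unfolding lipb_def
  proof (intro conjI)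
    show "\<exists>L. L-lipschitz_on UNIV (h k)"
    proof (intro exI[of _ "real k"])
    show "(real k)-lipschitz_on UNIV (h k)"
    proof (rule lipschitz_onI)
      fix x y :: 'c
      have "dist (h k x) (h k y) \<le> \<bar>real k * infdist x C - real k * infdist y C\<bar>"
        unfolding h_def dist_real_def by linarith
      also have "\<dots> = real k * \<bar>infdist x C - infdist y C\<bar>"
        by (simp add: abs_mult right_diff_distrib[symmetric])
      also have "\<dots> \<le> real k * dist x y"
        by (intro mult_left_mono infdist_triangle_abs) auto
      finally show "dist (h k x) (h k y) \<le> real k * dist x y" .
    qed simp
    qed
    have "0 \<le> real k * infdist z C" for z by (simp add: infdist_nonneg)
    then show "\<exists>B. \<forall>z. \<bar>h k z\<bar> \<le> B" unfolding h_def
      by (intro exI[of _ 1] allI) (smt (verit))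
  qed
  have lim: "(\<lambda>k. h k z) \<longlonglongrightarrow> indicator U z" for z
  proof (cases "z \<in> U")
    case True
    then have "z \<notin> C" using C_def by auto
    then have d: "infdist z C > 0" using in_closed_iff_infdist_zero[OF Ccl Cne] infdist_nonneg[of z C] by auto
    obtain N :: nat where N: "1 / infdist z C < real N" using reals_Archimedean2 by blast
    have "\<forall>\<^sub>F k in sequentially. h k z = indicator U z"
      unfolding eventually_sequentially
    proof (intro exI[of _ N] allI impI)
      fix k assume "N \<le> k"
      then have "1 / infdist z C < real k" using N by linarith
      then have "1 \<le> real k * infdist z C" using d by (simp add: divide_less_eq)
      then show "h k z = indicator U z" using True unfolding h_def by simp
    qed
    then show ?thesis by (rule tendsto_eventually)
  next
    case False
    then have "z \<in> C" using C_def by auto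
    then have "h k z = indicator U z" for k using False unfolding h_def by simp
    then show ?thesis by simp
  qed
  show ?thesis
  proof (rule Ap_lim[where h=h and B=1])
    show "bb (indicator U)" using U by (intro bb_indicator) auto
    show "bb (h k)" for k using lip lipb_bb by blast
    show "Ap M1 M2 (h k)" for k using lip Ap_lipb by blast
    show "(\<lambda>k. h k z) \<longlonglongrightarrow> indicator U z" for z by (rule lim)
    show "\<bar>h k z\<bar> \<le> 1" for k z using lip[of k] unfolding h_def using infdist_nonneg[of z C] by auto
  qed
qed

lemma Ap_indicator:
  assumes "A \<in> sets borel"
  shows "Ap M1 M2 (indicator A)"
proof -
  have i: "Int_stable {S::'c set. open S}" by (auto simp: Int_stable_def)
  have c: "{S::'c set. open S} \<subseteq> Pow UNIV" by auto
  have "A \<in> sigma_sets UNIV {S::'c set. open S}" using assms sets_borel by metis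
  with i c show ?thesis
  proof (induction rule: sigma_sets_induct_disjoint)
    case (basic A) then show ?case using Ap_open by auto
  next
    case empty show ?case using Ap_const[of 0] by simp
  next
    case (compl A)
    have bA: "bb (indicator A :: 'c \<Rightarrow> real)" using compl(1) by (intro bb_indicator) (simp add: sets_borel)
    have "Ap M1 M2 (\<lambda>z. 1 + (-1) * indicator A z)"
      using Ap_add[OF Ap_const Ap_mult[OF compl(2) bA] bb_const bb_mult[OF bA]] .
    moreover have "(\<lambda>z. 1 + (-1) * indicator A z) = (indicator (UNIV - A) :: 'c \<Rightarrow> real)"
      by (auto simp: indicator_def)
    ultimately show ?case by simp
  next
    case (union A)
    have bA: "bb (indicator (A i) :: 'c \<Rightarrow> real)" for i
      using union(2) by (intro bb_indicator) (auto simp add: sets_borel)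
    define S where "S n z = (\<Sum>i\<in>{..<n}. indicator (A i) z :: real)" for n z
    have S: "Ap M1 M2 (S n) \<and> bb (S n)" for n
      unfolding S_def using union(3) bA by (intro Ap_sum) auto
    have Sval: "S n z = (if \<exists>i<n. z \<in> A i then 1 else 0)" for n z
    proof (cases "\<exists>i. z \<in> A i")
      case True
      then obtain j where j: "z \<in> A j" by auto
      have "indicator (A i) z = (if i = j then 1 else (0::real))" for i
        using union(1) j by (auto simp: indicator_def disjoint_family_on_def)
      then have "S n z = (if j < n then 1 else 0)" unfolding S_def by simp
      moreover have "(\<exists>i<n. z \<in> A i) \<longleftrightarrow> j < n"
        using union(1) j by (auto simp: disjoint_family_on_def) (metis IntI empty_iff)
      ultimately show ?thesis by simp
    next
      case False then show ?thesis unfolding S_def by (auto simp: indicator_def)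
    qed
    have lim: "(\<lambda>n. S n z) \<longlonglongrightarrow> indicator (\<Union>i. A i) z" for z
    proof (cases "\<exists>i. z \<in> A i")
      case True
      then obtain j where j: "z \<in> A j" by auto
      have "\<forall>\<^sub>F n in sequentially. S n z = indicator (\<Union>i. A i) z"
        unfolding eventually_sequentially
        by (intro exI[of _ "Suc j"] allI impI) (use j in \<open>auto simp: Sval indicator_def\<close>)
      then show ?thesis by (rule tendsto_eventually)
    next
      case False then show ?thesis by (simp add: Sval)
    qed
    show ?case
    proof (rule Ap_lim[where h=S and B=1])
      show "bb (indicator (\<Union>i. A i))"
        using union(2) by (intro bb_indicator) (auto simp add: sets_borel intro: sigma_sets.Union)
    qed (use S lim in \<open>auto simp: Sval\<close>)
  qed
qed

lemma Ap_bb: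
  assumes g: "bb g"
  shows "Ap M1 M2 g"
proof -
  obtain B where B: "\<And>z. \<bar>g z\<bar> \<le> B" and gm[measurable]: "g \<in> borel_measurable borel"
    using g unfolding bb_def by auto
  define N where "N n = \<lceil>real (Suc n) * B\<rceil> + 1" for n
  define h where "h n z = (\<Sum>k\<in>{-N n..N n}. (real_of_int k / real (Suc n)) *
        indicator {z. \<lfloor>real (Suc n) * g z\<rfloor> = k} z)" for n z
  have hval: "h n z = real_of_int \<lfloor>real (Suc n) * g z\<rfloor> / real (Suc n)" for n z
  proof -
    let ?x = "real (Suc n) * g z"
    have "\<bar>?x\<bar> \<le> real (Suc n) * B" using B[of z] by (simp add: abs_mult mult_left_mono)
    then have x1: "?x \<le> real (Suc n) * B" and x2: "- (real (Suc n) * B) \<le> ?x" by linarith+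
    have f1: "real_of_int \<lfloor>?x\<rfloor> \<le> ?x" "?x < real_of_int \<lfloor>?x\<rfloor> + 1" by linarith+
    have c1: "real (Suc n) * B \<le> real_of_int \<lceil>real (Suc n) * B\<rceil>" by linarith
    have "real_of_int \<lfloor>?x\<rfloor> \<le> real_of_int (N n)" "real_of_int (- N n) \<le> real_of_int \<lfloor>?x\<rfloor>"
      using x1 x2 f1 c1 by (simp only: N_def of_int_add of_int_minus of_int_1; linarith)+
    then have inr: "\<lfloor>?x\<rfloor> \<in> {-N n..N n}" by (simp only: of_int_le_iff atLeastAtMost_iff)
    have "h n z = (\<Sum>k\<in>{-N n..N n}. if k = \<lfloor>?x\<rfloor> then real_of_int k / real (Suc n) else 0)"
      unfolding h_def by (intro sum.cong) (auto simp: indicator_def)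
    also have "\<dots> = real_of_int \<lfloor>?x\<rfloor> / real (Suc n)" using inr by (simp add: sum.delta')
    finally show ?thesis .
  qed
  have hS: "Ap M1 M2 (h n) \<and> bb (h n)" for n
    unfolding h_def
  proof (intro Ap_sum ballI conjI)
    fix k assume "k \<in> {-N n..N n}"
    have mk: "{z. \<lfloor>real (Suc n) * g z\<rfloor> = k} \<in> sets borel" by measurable
    show "Ap M1 M2 (\<lambda>z. real_of_int k / real (Suc n) * indicator {z. \<lfloor>real (Suc n) * g z\<rfloor> = k} z)"
      using Ap_mult[OF Ap_indicator[OF mk] bb_indicator[OF mk]] .
    show "bb (\<lambda>z. real_of_int k / real (Suc n) * indicator {z. \<lfloor>real (Suc n) * g z\<rfloor> = k} z)"
      using bb_mult[OF bb_indicator[OF mk]] .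
  qed auto
  have err: "\<bar>h n z - g z\<bar> \<le> 1 / real (Suc n)" for n z
  proof -
    let ?x = "real (Suc n) * g z"
    have "real_of_int \<lfloor>?x\<rfloor> \<le> ?x" "?x < real_of_int \<lfloor>?x\<rfloor> + 1" by linarith+
    then have "\<bar>real_of_int \<lfloor>?x\<rfloor> - ?x\<bar> \<le> 1" by linarith
    have eq: "real_of_int \<lfloor>?x\<rfloor> / real (Suc n) - g z = (real_of_int \<lfloor>?x\<rfloor> - ?x) / real (Suc n)"
      by (simp add: field_simps)
    have "\<bar>real_of_int \<lfloor>?x\<rfloor> / real (Suc n) - g z\<bar> \<le> 1 / real (Suc n)"
      unfolding eq abs_divide using \<open>\<bar>real_of_int \<lfloor>?x\<rfloor> - ?x\<bar> \<le> 1\<close>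
      by (metis abs_of_nat divide_right_mono of_nat_0_le_iff)
    then show ?thesis using hval by simp
  qed
  show ?thesis
  proof (rule Ap_lim[where h=h and B="B+1"])
    show "bb g" by fact
    show "bb (h k)" "Ap M1 M2 (h k)" for k using hS by auto
    show "(\<lambda>k. h k z) \<longlonglongrightarrow> g z" for z
    proof -
      have "(\<lambda>k. 1 / real (Suc k)) \<longlonglongrightarrow> 0" by (rule LIMSEQ_inverse_real_of_nat[unfolded inverse_eq_divide])
      then have "(\<lambda>k. h k z - g z) \<longlonglongrightarrow> 0"
        by (rule Lim_null_comparison[rotated]) (use err in \<open>auto intro!: always_eventually\<close>)
      then show ?thesis by (simp add: LIM_zero_iff)
    qed
    show "\<bar>h k z\<bar> \<le> B + 1" for k z
    proof -
      have "1 / real (Suc k) \<le> 1" by simp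
      then show ?thesis using err[of k z] B[of z] by linarith
    qed
  qed
qed

end


lemma exp_diff_le:
  fixes a b M :: real
  assumes "a \<le> M" "b \<le> M"
  shows "\<bar>exp a - exp b\<bar> \<le> exp M * \<bar>a - b\<bar>"
proof -
  have gen: "exp u - exp v \<le> exp M * \<bar>u - v\<bar>" if "u \<le> M" for u v :: real
  proof -
    have "exp v = exp u * exp (v - u)" by (simp add: exp_diff)
    also have "\<dots> \<ge> exp u * (1 + (v - u))" by (intro mult_left_mono) auto
    finally have "exp u - exp v \<le> exp u * (u - v)" by (simp add: algebra_simps)
    also have "\<dots> \<le> exp u * \<bar>u - v\<bar>" by (intro mult_left_mono) auto
    also have "\<dots> \<le> exp M * \<bar>u - v\<bar>" using that by (intro mult_right_mono) auto
    finally show ?thesis .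
  qed
  show ?thesis using gen[of a b] gen[of b a] assms by (simp add: abs_le_iff abs_minus_commute)
qed

lemma ln_diff_le:
  fixes u v M :: real
  assumes "exp (-M) \<le> u" "exp (-M) \<le> v"
  shows "\<bar>ln u - ln v\<bar> \<le> exp M * \<bar>u - v\<bar>"
proof -
  have gen: "ln v - ln u \<le> exp M * \<bar>u - v\<bar>" if "exp (-M) \<le> u" "exp (-M) \<le> v" for u v :: real
  proof -
    have u: "u > 0" "v > 0" using that exp_gt_zero[of "-M"] by linarith+
    have "ln v - ln u = ln (v / u)" using u by (simp add: ln_div)
    also have "\<dots> \<le> v / u - 1" using u by (intro ln_le_minus_one) auto
    also have "\<dots> = (v - u) / u" using u by (simp add: field_simps)
    also have "\<dots> \<le> \<bar>u - v\<bar> / u" using u by (intro divide_right_mono) auto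
    also have "\<dots> = \<bar>u - v\<bar> * (1 / u)" by simp
    also have "\<dots> \<le> \<bar>u - v\<bar> * exp M"
    proof (intro mult_left_mono)
      have "1 / u \<le> 1 / exp (-M)" using u that by (intro divide_left_mono) auto
      then show "1 / u \<le> exp M" by (simp add: exp_minus inverse_eq_divide)
    qed auto
    finally show ?thesis by (simp add: mult.commute)
  qed
  show ?thesis using gen[of u v] gen[of v u] assms by (simp add: abs_le_iff abs_minus_commute)
qed

lemma clip_lip:
  fixes a b M :: real
  shows "dist (max (-M) (min M a)) (max (-M) (min M b)) \<le> dist a b"
  unfolding dist_real_def by linarith

locale mctx =
  fixes \<nu> :: "'a::metric_space measure" and \<pi> :: "('a \<times> 'b::metric_space) measure"
  assumes cA: "compact (UNIV :: 'a set)" and cB: "compact (UNIV :: 'b set)"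
    and sn: "sets \<nu> = sets borel" and pn: "prob_space \<nu>"
    and sp: "sets \<pi> = sets borel" and pp: "prob_space \<pi>"
begin

definition "LS = {f :: 'a \<times> 'b \<Rightarrow> real. (\<exists>L. L-lipschitz_on UNIV f) \<and>
            (\<forall>y. (\<integral>\<^sup>+ x. ennreal (exp (f (x, y))) \<partial>\<nu>) = 1)}"
definition "S = (SUP f \<in> LS. ereal (integral\<^sup>L \<pi> f))"
definition "\<pi>Y = distr \<pi> borel snd"
definition "\<rho> = \<nu> \<Otimes>\<^sub>M \<pi>Y"

lemma pY: "prob_space \<pi>Y"
  unfolding \<pi>Y_def
proof (rule prob_space.prob_space_distr[OF pp])
  have "(\<lambda>z. snd z) \<in> borel_measurable (borel :: ('a\<times>'b) measure)"
    by (intro borel_measurable_continuous_onI continuous_intros)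
  then show "snd \<in> \<pi> \<rightarrow>\<^sub>M borel" by (simp add: measurable_cong_sets[OF sp refl])
qed

lemma sY: "sets \<pi>Y = sets borel" unfolding \<pi>Y_def by simp

lemma snd_meas: "snd \<in> \<pi> \<rightarrow>\<^sub>M borel"
proof -
  have "(\<lambda>z. snd z) \<in> borel_measurable (borel :: ('a\<times>'b) measure)"
    by (intro borel_measurable_continuous_onI continuous_intros)
  then show "snd \<in> \<pi> \<rightarrow>\<^sub>M borel" by (simp add: measurable_cong_sets[OF sp refl])
qed

lemma pair: "pair_prob_space \<nu> \<pi>Y"
  using pn pY by (simp add: pair_prob_space_def pair_sigma_finite_def prob_space_imp_sigma_finite)

lemma s\<rho>: "sets \<rho> = sets borel"
  unfolding \<rho>_def using sets_pair_measure_cong[OF sn sY] sets_pair_borel[OF cA cB] by simp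

lemma f\<rho>: "finite_measure \<rho>"
proof -
  interpret pair_prob_space \<nu> \<pi>Y by (rule pair)
  show ?thesis unfolding \<rho>_def by (rule P.finite_measure_axioms)
qed

lemma fm: "finite_measure \<pi>" using pp by (rule prob_space.finite_measure)

lemma tfm: "two_fm \<pi> \<rho>"
  using fm f\<rho> sp s\<rho> by (simp add: two_fm_def)


lemma sec_meas:
  assumes "h \<in> borel_measurable (borel::('a\<times>'b) measure)"
  shows "(\<lambda>x. h (x,y)) \<in> borel_measurable \<nu>"
proof -
  have "(\<lambda>x. (x,y)) \<in> measurable (borel::'a measure) (borel::('a\<times>'b) measure)"
    by (intro borel_measurable_continuous_onI continuous_intros)
  from measurable_compose[OF this assms] have "(\<lambda>x. h (x,y)) \<in> borel_measurable borel" .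
  then show ?thesis by (simp add: measurable_cong_sets[OF sn refl])
qed

lemma sec_int:
  assumes "bb (h :: 'a \<times> 'b \<Rightarrow> real)"
  shows "integrable \<nu> (\<lambda>x. h (x,y))"
proof -
  interpret finite_measure \<nu> using pn by (rule prob_space.finite_measure)
  obtain B where B: "\<And>z. \<bar>h z\<bar> \<le> B" and m: "h \<in> borel_measurable borel" using assms unfolding bb_def by auto
  show ?thesis using B sec_meas[OF m] by (intro integrable_const_bound[where B=B]) auto
qed

lemma bb_exp: "bb h \<Longrightarrow> bb (\<lambda>z. exp (h z))"
  unfolding bb_def
proof (elim conjE exE, intro conjI)
  fix B assume "\<forall>z. \<bar>h z\<bar> \<le> B"
  then have "h z \<le> B" for z by (metis abs_le_D1)
  then show "\<exists>B. \<forall>z. \<bar>exp (h z)\<bar> \<le> B" by (intro exI[of _ "exp B"] allI) auto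
qed auto

lemma S_upper: "f \<in> LS \<Longrightarrow> ereal (integral\<^sup>L \<pi> f) \<le> S"
  unfolding S_def by (rule SUP_upper)

lemma core:
  assumes g: "bb g" and gM: "\<And>z. \<bar>g z\<bar> \<le> M" and K: "K > 0"
    and gK: "\<And>y. (\<integral>x. exp (g (x,y)) \<partial>\<nu>) \<le> K"
  shows "ereal (integral\<^sup>L \<pi> g - ln K) \<le> S"
proof (rule ereal_le_epsilon2)
  fix e :: real assume e: "e > 0"
  interpret N: prob_space \<nu> by (rule pn)
  interpret P: prob_space \<pi> by (rule pp)
  interpret T: two_fm \<pi> \<rho> by (rule tfm)
  have M0: "M \<ge> 0" using gM[of undefined] by linarith
  define c where "c = exp M / K"
  have c0: "c \<ge> 0" unfolding c_def using K by simp
  define \<delta> where "\<delta> = e / (1 + c)"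
  have \<delta>0: "\<delta> > 0" unfolding \<delta>_def using e c0 by simp
  obtain f0 where f0: "lipb f0" "(\<integral>z. \<bar>f0 z - g z\<bar> \<partial>\<pi>) < \<delta>" "(\<integral>z. \<bar>f0 z - g z\<bar> \<partial>\<rho>) < \<delta>"
    using T.Ap_bb[OF g] \<delta>0 unfolding Ap_def by blast
  obtain L where L0: "L-lipschitz_on UNIV f0" using f0(1) unfolding lipb_def by blast
  define f where "f z = max (-M) (min M (f0 z))" for z
  have fM: "\<bar>f z\<bar> \<le> M" for z unfolding f_def using M0 by auto
  have fL: "L-lipschitz_on UNIV f"
  proof (rule lipschitz_onI)
    fix x y :: "'a \<times> 'b"
    have "dist (f x) (f y) \<le> dist (f0 x) (f0 y)" unfolding f_def by (rule clip_lip)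
    also have "\<dots> \<le> L * dist x y" using L0 by (rule lipschitz_onD) auto
    finally show "dist (f x) (f y) \<le> L * dist x y" .
  qed (use L0 lipschitz_on_nonneg in auto)
  have L0': "L \<ge> 0" using L0 lipschitz_on_nonneg by blast
  have flipb: "lipb f" unfolding lipb_def using fL fM by blast
  have fbb: "bb f" using flipb by (rule lipb_bb)
  have fg_le: "\<bar>f z - g z\<bar> \<le> \<bar>f0 z - g z\<bar>" for z
    using gM[of z] unfolding f_def by linarith
  have fgi: "(\<integral>z. \<bar>f z - g z\<bar> \<partial>Q) < \<delta>"
    if Q: "finite_measure Q" "sets Q = sets borel" "(\<integral>z. \<bar>f0 z - g z\<bar> \<partial>Q) < \<delta>" for Q
  proof -
    have "(\<integral>z. \<bar>f z - g z\<bar> \<partial>Q) \<le> (\<integral>z. \<bar>f0 z - g z\<bar> \<partial>Q)"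
    proof (rule integral_mono)
      show "integrable Q (\<lambda>z. \<bar>f z - g z\<bar>)" by (intro bb_integrable Q bb_abs bb_diff fbb g)
      show "integrable Q (\<lambda>z. \<bar>f0 z - g z\<bar>)" by (intro bb_integrable Q bb_abs bb_diff lipb_bb[OF f0(1)] g)
    qed (rule fg_le)
    then show ?thesis using Q(3) by linarith
  qed
  have fg\<pi>: "(\<integral>z. \<bar>f z - g z\<bar> \<partial>\<pi>) < \<delta>" using fgi[OF fm sp f0(2)] .
  have fg\<rho>: "(\<integral>z. \<bar>f z - g z\<bar> \<partial>\<rho>) < \<delta>" using fgi[OF f\<rho> s\<rho> f0(3)] .

  define Z where "Z y = (\<integral>x. exp (f (x,y)) \<partial>\<nu>)" for y
  have efbb: "bb (\<lambda>z. exp (f z))" by (rule bb_exp[OF fbb])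
  have efint: "integrable \<nu> (\<lambda>x. exp (f (x,y)))" for y using sec_int[OF efbb] by simp
  have Zlo: "exp (-M) \<le> Z y" for y
  proof -
    have "(\<integral>x. exp (-M) \<partial>\<nu>) \<le> Z y" unfolding Z_def
    proof (intro integral_mono)
      fix x have "-M \<le> f (x,y)" using fM[of "(x,y)"] by linarith
      then show "exp (-M) \<le> exp (f (x,y))" by simp
    qed (use efint in auto)
    then show ?thesis by (simp add: N.prob_space)
  qed
  have Zhi: "Z y \<le> exp M" for y
  proof -
    have "Z y \<le> (\<integral>x. exp M \<partial>\<nu>)" unfolding Z_def
      using fM efint by (intro integral_mono) (auto simp: abs_le_iff)
    then show ?thesis by (simp add: N.prob_space)
  qed
  have Zpos: "Z y > 0" for y using Zlo[of y] exp_gt_zero[of "-M"] by linarith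
  have fsec: "\<bar>f (x,y) - f (x,y')\<bar> \<le> L * dist y y'" for x y y'
    using lipschitz_onD[OF fL, of "(x,y)" "(x,y')"] by (simp add: dist_Pair_Pair dist_real_def)
  have Zlip: "\<bar>Z y - Z y'\<bar> \<le> exp M * L * dist y y'" for y y'
  proof -
    have "\<bar>Z y - Z y'\<bar> = \<bar>\<integral>x. exp (f (x,y)) - exp (f (x,y')) \<partial>\<nu>\<bar>"
      unfolding Z_def using efint by (subst Bochner_Integration.integral_diff) auto
    also have "\<dots> \<le> (\<integral>x. \<bar>exp (f (x,y)) - exp (f (x,y'))\<bar> \<partial>\<nu>)"
      by (rule integral_abs_bound)
    also have "\<dots> \<le> (\<integral>x. exp M * L * dist y y' \<partial>\<nu>)"
    proof (intro integral_mono)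
      show "integrable \<nu> (\<lambda>x. \<bar>exp (f (x, y)) - exp (f (x, y'))\<bar>)" using efint by auto
      fix x
      have "\<bar>exp (f (x, y)) - exp (f (x, y'))\<bar> \<le> exp M * \<bar>f (x,y) - f (x,y')\<bar>"
        using fM[of "(x,y)"] fM[of "(x,y')"] by (intro exp_diff_le) auto
      also have "\<dots> \<le> exp M * (L * dist y y')" using fsec by (intro mult_left_mono) auto
      finally show "\<bar>exp (f (x, y)) - exp (f (x, y'))\<bar> \<le> exp M * L * dist y y'" by simp
    qed auto
    also have "\<dots> = exp M * L * dist y y'" by (simp add: N.prob_space)
    finally show ?thesis .
  qed
  define G where "G (z::'a\<times>'b) = ln (Z (snd z))" for z
  have GL: "(exp M * (exp M * L))-lipschitz_on UNIV G"
  proof (rule lipschitz_onI)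
    fix p q :: "'a \<times> 'b"
    have "dist (G p) (G q) = \<bar>ln (Z (snd p)) - ln (Z (snd q))\<bar>" unfolding G_def dist_real_def ..
    also have "\<dots> \<le> exp M * \<bar>Z (snd p) - Z (snd q)\<bar>" using Zlo by (intro ln_diff_le)
    also have "\<dots> \<le> exp M * (exp M * L * dist (snd p) (snd q))" using Zlip by (intro mult_left_mono) auto
    also have "\<dots> \<le> exp M * (exp M * L * dist p q)"
      using L0' dist_snd_le[of p q] by (intro mult_left_mono) auto
    finally show "dist (G p) (G q) \<le> exp M * (exp M * L) * dist p q" by (simp add: mult.assoc)
  qed (use L0' in auto)
  have GM: "\<bar>G z\<bar> \<le> M" for z
  proof -
    have "ln (exp (-M)) \<le> G z" unfolding G_def using Zlo Zpos by (subst ln_le_cancel_iff) auto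
    moreover have "G z \<le> ln (exp M)" unfolding G_def using Zhi Zpos by (subst ln_le_cancel_iff) auto
    ultimately show ?thesis by auto
  qed
  have Glipb: "lipb G" unfolding lipb_def using GL GM by blast
  define F where "F z = f z - G z" for z
  have FL: "(L + exp M * (exp M * L))-lipschitz_on UNIV F"
    unfolding F_def using lipschitz_on_diff[OF fL GL] .
  have Fnorm: "(\<integral>\<^sup>+ x. ennreal (exp (F (x, y))) \<partial>\<nu>) = 1" for y
  proof -
    have eq: "exp (F (x,y)) = exp (f (x,y)) / Z y" for x
      unfolding F_def G_def using Zpos[of y] by (simp add: exp_diff)
    have "(\<integral>\<^sup>+ x. ennreal (exp (F (x, y))) \<partial>\<nu>) = (\<integral>\<^sup>+ x. ennreal (exp (f (x,y)) / Z y) \<partial>\<nu>)"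
      by (simp add: eq)
    also have "\<dots> = ennreal (\<integral>x. exp (f (x,y)) / Z y \<partial>\<nu>)"
      using efint[of y] Zpos[of y] by (intro nn_integral_eq_integral) auto
    also have "(\<integral>x. exp (f (x,y)) / Z y \<partial>\<nu>) = Z y / Z y" unfolding Z_def by simp
    also have "\<dots> = 1" using Zpos[of y] by simp
    finally show ?thesis by simp
  qed
  have FLS: "F \<in> LS" unfolding LS_def using FL Fnorm by blast
  have SF: "ereal (integral\<^sup>L \<pi> F) \<le> S" using S_upper[OF FLS] .
  have intf: "integrable \<pi> f" using bb_integrable[OF fm sp fbb] .
  have intG: "integrable \<pi> G" using bb_integrable[OF fm sp lipb_bb[OF Glipb]] .
  have intg: "integrable \<pi> g" using bb_integrable[OF fm sp g] .
  have IF: "integral\<^sup>L \<pi> F = integral\<^sup>L \<pi> f - integral\<^sup>L \<pi> G"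
    unfolding F_def using intf intG by (rule Bochner_Integration.integral_diff)
  have If: "integral\<^sup>L \<pi> g - \<delta> \<le> integral\<^sup>L \<pi> f"
  proof -
    have "integral\<^sup>L \<pi> g - integral\<^sup>L \<pi> f = (\<integral>z. g z - f z \<partial>\<pi>)"
      using intg intf by (rule Bochner_Integration.integral_diff[symmetric])
    also have "\<dots> \<le> (\<integral>z. \<bar>f z - g z\<bar> \<partial>\<pi>)"
      using intg intf by (intro integral_mono) auto
    finally show ?thesis using fg\<pi> by linarith
  qed
  define D where "D y = (\<integral>x. \<bar>f (x,y) - g (x,y)\<bar> \<partial>\<nu>)" for y
  have fgbb: "bb (\<lambda>z. \<bar>f z - g z\<bar>)" by (intro bb_abs bb_diff fbb g)
  have Dint: "integrable \<nu> (\<lambda>x. \<bar>f (x,y) - g (x,y)\<bar>)" for y using sec_int[OF fgbb] by simp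
  have egint: "integrable \<nu> (\<lambda>x. exp (g (x,y)))" for y using sec_int[OF bb_exp[OF g]] by simp
  have D0: "D y \<ge> 0" for y unfolding D_def by simp
  have Zup: "Z y \<le> K + exp M * D y" for y
  proof -
    have "Z y = (\<integral>x. exp (g (x,y)) \<partial>\<nu>) + (\<integral>x. exp (f (x,y)) - exp (g (x,y)) \<partial>\<nu>)"
      unfolding Z_def using efint egint by (subst Bochner_Integration.integral_diff) auto
    also have "(\<integral>x. exp (f (x,y)) - exp (g (x,y)) \<partial>\<nu>) \<le> (\<integral>x. exp M * \<bar>f (x,y) - g (x,y)\<bar> \<partial>\<nu>)"
    proof (intro integral_mono)
      fix x
      have "exp (f (x,y)) - exp (g (x,y)) \<le> \<bar>exp (f (x,y)) - exp (g (x,y))\<bar>" by simp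
      also have "\<dots> \<le> exp M * \<bar>f (x,y) - g (x,y)\<bar>"
        using fM[of "(x,y)"] gM[of "(x,y)"] by (intro exp_diff_le) auto
      finally show "exp (f (x,y)) - exp (g (x,y)) \<le> exp M * \<bar>f (x,y) - g (x,y)\<bar>" .
    qed (use efint egint Dint in auto)
    also have "(\<integral>x. exp M * \<bar>f (x,y) - g (x,y)\<bar> \<partial>\<nu>) = exp M * D y" unfolding D_def by simp
    finally show ?thesis using gK[of y] by linarith
  qed
  have Gpt: "G z \<le> ln K + c * D (snd z)" for z
  proof -
    define y where "y = snd z"
    define t where "t = exp M * D y"
    have t0: "t \<ge> 0" unfolding t_def using D0 by simp
    have "G z = ln (Z y)" unfolding G_def y_def ..
    also have "\<dots> \<le> ln (K + t)" using Zpos[of y] Zup[of y] K t0 unfolding t_def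
      by (subst ln_le_cancel_iff) auto
    also have "K + t = K * (1 + t / K)" using K by (simp add: field_simps)
    also have "ln (K * (1 + t / K)) = ln K + ln (1 + t / K)" using K t0 by (intro ln_mult_pos) (auto simp: add_pos_nonneg)
    also have "ln (1 + t / K) \<le> t / K" using K t0 by (intro ln_add_one_self_le_self) auto
    also have "t / K = c * D y" unfolding t_def c_def by simp
    finally show ?thesis unfolding y_def by simp
  qed
  interpret PP: pair_prob_space \<nu> \<pi>Y by (rule pair)
  have int\<rho>: "integrable \<rho> (\<lambda>z. \<bar>f z - g z\<bar>)" using bb_integrable[OF f\<rho> s\<rho> fgbb] .
  have cp: "(\<lambda>z. \<bar>f z - g z\<bar>) = case_prod (\<lambda>x y. \<bar>f (x,y) - g (x,y)\<bar>)" by auto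
  have int\<rho>': "integrable (\<nu> \<Otimes>\<^sub>M \<pi>Y) (case_prod (\<lambda>x y. \<bar>f (x,y) - g (x,y)\<bar>))"
    using int\<rho> unfolding \<rho>_def cp .
  have DY: "integrable \<pi>Y D" unfolding D_def by (rule PP.integrable_snd[OF int\<rho>'])
  have DYi: "(\<integral>y. D y \<partial>\<pi>Y) = (\<integral>z. \<bar>f z - g z\<bar> \<partial>\<rho>)"
    unfolding D_def \<rho>_def cp by (rule PP.integral_snd[OF int\<rho>'])
  have Dm: "D \<in> borel_measurable borel"
    using borel_measurable_integrable[OF DY] by (simp add: measurable_cong_sets[OF sY refl])
  have D\<pi>: "integrable \<pi> (\<lambda>z. D (snd z))"
    using DY unfolding \<pi>Y_def by (subst (asm) integrable_distr_eq[OF snd_meas Dm])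
  have D\<pi>i: "(\<integral>z. D (snd z) \<partial>\<pi>) = (\<integral>y. D y \<partial>\<pi>Y)"
    unfolding \<pi>Y_def by (rule integral_distr[OF snd_meas Dm, symmetric])
  have IG: "integral\<^sup>L \<pi> G \<le> ln K + c * \<delta>"
  proof -
    have "integral\<^sup>L \<pi> G \<le> (\<integral>z. ln K + c * D (snd z) \<partial>\<pi>)"
      using intG D\<pi> Gpt by (intro integral_mono) auto
    also have "\<dots> = ln K + c * (\<integral>z. D (snd z) \<partial>\<pi>)"
      using D\<pi> by (simp add: P.prob_space)
    also have "\<dots> \<le> ln K + c * \<delta>"
      using D\<pi>i DYi fg\<rho> c0 by (simp add: mult_left_mono)
    finally show ?thesis .
  qed
  have e_eq: "\<delta> + c * \<delta> = e"
  proof -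
    have "\<delta> + c * \<delta> = (1 + c) * \<delta>" by (simp add: algebra_simps)
    also have "\<dots> = e" unfolding \<delta>_def using c0 by simp
    finally show ?thesis .
  qed
  have "integral\<^sup>L \<pi> g - ln K \<le> integral\<^sup>L \<pi> F + e"
    using IF If IG e_eq by linarith
  then have "ereal (integral\<^sup>L \<pi> g - ln K) \<le> ereal (integral\<^sup>L \<pi> F) + ereal e" by simp
  also have "\<dots> \<le> S + ereal e" using SF by (rule add_right_mono)
  finally show "ereal (integral\<^sup>L \<pi> g - ln K) \<le> S + ereal e" .
qed

end


lemma enn2ereal_fin: "x \<noteq> \<infinity> \<Longrightarrow> enn2ereal x = ereal (enn2real x)"
proof -
  assume "x \<noteq> \<infinity>"
  then have "x < top" by (simp add: top.not_eq_extremum)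
  then have "x = ennreal (enn2real x)" by simp
  then have "enn2ereal x = enn2ereal (ennreal (enn2real x))" by simp
  also have "\<dots> = ereal (enn2real x)" by (simp add: enn2real_nonneg)
  finally show ?thesis .
qed

lemma ext_integral_integrable:
  assumes "integrable M f"
  shows "ext_integral M f = ereal (integral\<^sup>L M f)"
proof -
  have a: "(\<integral>\<^sup>+ x. ennreal (f x) \<partial>M) \<noteq> \<infinity>" "(\<integral>\<^sup>+ x. ennreal (- f x) \<partial>M) \<noteq> \<infinity>"
    using assms unfolding real_integrable_def by auto
  show ?thesis unfolding ext_integral_def real_lebesgue_integral_def[OF assms]
    using a by (simp add: enn2ereal_fin)
qed

lemma integrable_wd: "integrable M f \<Longrightarrow> f \<in> wd_functions M"
  unfolding wd_functions_def real_integrable_def by auto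

context mctx begin

lemma lip_bounded:
  assumes "L-lipschitz_on UNIV (f :: 'a \<times> 'b \<Rightarrow> real)"
  shows "\<exists>B. \<forall>z. \<bar>f z\<bar> \<le> B"
proof -
  have cU: "compact (UNIV::('a\<times>'b) set)" using compact_Times[OF cA cB] by simp
  have "compact (f ` UNIV)"
    using compact_continuous_image[OF lipschitz_on_continuous_on[OF assms] cU] .
  then have "bounded (f ` UNIV)" by (rule compact_imp_bounded)
  then show ?thesis unfolding bounded_iff by auto
qed

lemma LS_lipb: "f \<in> LS \<Longrightarrow> lipb f"
  unfolding LS_def lipb_def using lip_bounded by blast

lemma zero_LS: "(\<lambda>z. 0) \<in> LS"
proof -
  interpret N: prob_space \<nu> by (rule pn)
  have "(\<integral>\<^sup>+ x. ennreal (exp 0) \<partial>\<nu>) = 1" by (simp add: N.emeasure_space_1)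
  then show ?thesis unfolding LS_def by (auto intro: lipschitz_on_constant)
qed

lemma S0: "0 \<le> S"
  using S_upper[OF zero_LS] by (simp add: zero_ereal_def)

lemma trunc:
  assumes c: "c \<in> wd_functions \<pi>" and cn: "\<And>y. (\<integral>\<^sup>+ x. ennreal (exp (c (x, y))) \<partial>\<nu>) = 1"
  shows "ext_integral \<pi> c \<le> S"
proof -
  interpret N: prob_space \<nu> by (rule pn)
  interpret P: prob_space \<pi> by (rule pp)
  have cm: "c \<in> borel_measurable \<pi>" using c unfolding wd_functions_def by auto
  have cm': "c \<in> borel_measurable borel" using cm by (simp add: measurable_cong_sets[OF sp refl])
  define Pp where "Pp = (\<integral>\<^sup>+ z. ennreal (c z) \<partial>\<pi>)"
  define Nn where "Nn = (\<integral>\<^sup>+ z. ennreal (- c z) \<partial>\<pi>)"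
  have ext: "ext_integral \<pi> c = enn2ereal Pp - enn2ereal Nn" unfolding ext_integral_def Pp_def Nn_def ..
  show ?thesis
  proof (cases "Nn = \<infinity>")
    case True
    then have "Pp \<noteq> \<infinity>" using c unfolding wd_functions_def Pp_def Nn_def by auto
    then have "ext_integral \<pi> c = -\<infinity>" using True unfolding ext by (simp add: enn2ereal_fin)
    then show ?thesis by simp
  next
    case Nfin: False
    show ?thesis
    proof (cases "S = \<infinity>")
      case True then show ?thesis by simp
    next
      case False
      then obtain s where s: "S = ereal s" using S0 by (cases S) auto
      have s0: "s \<ge> 0" using S0 s by simp
      define Nr where "Nr = enn2real Nn"
      have Nr0: "Nr \<ge> 0" unfolding Nr_def by (simp add: enn2real_nonneg)
      define g where "g n z = max (- real n) (min (real n) (c z))" for n :: nat and z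
      define p where "p n z = min (real n) (max 0 (c z))" for n :: nat and z
      define q where "q n z = min (real n) (max 0 (- c z))" for n :: nat and z
      have gpq: "g n z = p n z - q n z" for n z unfolding g_def p_def q_def by auto
      have gbb: "bb (g n)" for n
        unfolding bb_def g_def using cm' by (intro conjI exI[of _ "real n"] allI) auto
      have pbb: "bb (p n)" for n
        unfolding bb_def p_def using cm' by (intro conjI exI[of _ "real n"] allI) auto
      have qbb: "bb (q n)" for n
        unfolding bb_def q_def using cm' by (intro conjI exI[of _ "real n"] allI) auto
      have gZ: "(\<integral>x. exp (g n (x,y)) \<partial>\<nu>) \<le> 1 + exp (- real n)" for n y
      proof -
        have cs: "(\<lambda>x. c (x,y)) \<in> borel_measurable \<nu>" by (rule sec_meas[OF cm'])
        have "(\<integral>\<^sup>+ x. ennreal (exp (g n (x,y))) \<partial>\<nu>) \<le> (\<integral>\<^sup>+ x. ennreal (exp (c (x,y))) + ennreal (exp (- real n)) \<partial>\<nu>)"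
        proof (intro nn_integral_mono)
          fix x
          have "g n (x,y) \<le> c (x,y) \<or> g n (x,y) = - real n" unfolding g_def by (auto simp: max_def min_def)
          then have "exp (g n (x,y)) \<le> exp (c (x,y)) + exp (- real n)"
          proof
            assume "g n (x,y) \<le> c (x,y)"
            then have "exp (g n (x,y)) \<le> exp (c (x,y))" by simp
            then show ?thesis using exp_gt_zero[of "- real n"] by linarith
          next
            assume "g n (x,y) = - real n"
            then show ?thesis using exp_gt_zero[of "c (x,y)"] by simp
          qed
          then show "ennreal (exp (g n (x,y))) \<le> ennreal (exp (c (x,y))) + ennreal (exp (- real n))"
            by (simp add: ennreal_plus[symmetric] del: ennreal_plus)
        qed
        also have "\<dots> = 1 + ennreal (exp (- real n))"
          using cs by (subst nn_integral_add) (auto simp: cn N.emeasure_space_1)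
        also have "\<dots> = ennreal (1 + exp (- real n))" by (subst ennreal_plus) auto
        finally have le: "(\<integral>\<^sup>+ x. ennreal (exp (g n (x,y))) \<partial>\<nu>) \<le> ennreal (1 + exp (- real n))" .
        have "(\<integral>\<^sup>+ x. ennreal (exp (g n (x,y))) \<partial>\<nu>) = ennreal (\<integral>x. exp (g n (x,y)) \<partial>\<nu>)"
          using sec_int[OF bb_exp[OF gbb[of n]]] by (intro nn_integral_eq_integral) auto
        with le have "ennreal (\<integral>x. exp (g n (x,y)) \<partial>\<nu>) \<le> ennreal (1 + exp (- real n))" by simp
        moreover have "0 \<le> 1 + exp (- real n)" using exp_gt_zero[of "- real n"] by linarith
        ultimately show ?thesis by (simp only: ennreal_le_iff)
      qed
      have gS: "integral\<^sup>L \<pi> (g n) \<le> s + exp (- real n)" for n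
      proof -
        have "ereal (integral\<^sup>L \<pi> (g n) - ln (1 + exp (- real n))) \<le> S"
        proof (rule core[OF gbb[of n] _ _ gZ])
          show "\<bar>g n z\<bar> \<le> real n" for z unfolding g_def by auto
          show "0 < 1 + exp (- real n)" using exp_gt_zero[of "- real n"] by linarith
        qed
        then have "integral\<^sup>L \<pi> (g n) \<le> s + ln (1 + exp (- real n))" using s by simp
        moreover have "ln (1 + exp (- real n)) \<le> exp (- real n)" by (rule ln_add_one_self_le_self) simp
        ultimately show ?thesis by linarith
      qed
      define a where "a n = integral\<^sup>L \<pi> (p n)" for n
      have intp: "integrable \<pi> (p n)" for n using bb_integrable[OF fm sp pbb] .
      have intq: "integrable \<pi> (q n)" for n using bb_integrable[OF fm sp qbb] .
      have qN: "integral\<^sup>L \<pi> (q n) \<le> Nr" for n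
      proof -
        have "ennreal (integral\<^sup>L \<pi> (q n)) = (\<integral>\<^sup>+ z. ennreal (q n z) \<partial>\<pi>)"
          using intq by (intro nn_integral_eq_integral[symmetric]) (auto simp: q_def)
        also have "\<dots> \<le> Nn" unfolding Nn_def
        proof (intro nn_integral_mono)
          fix z show "ennreal (q n z) \<le> ennreal (- c z)"
          proof (cases "- c z \<ge> 0")
            case True then show ?thesis unfolding q_def by (intro ennreal_leI) auto
          next
            case False then show ?thesis unfolding q_def by (simp add: ennreal_neg)
          qed
        qed
        finally have "ennreal (integral\<^sup>L \<pi> (q n)) \<le> Nn" .
        moreover have "Nn = ennreal Nr" unfolding Nr_def using Nfin by (simp add: top.not_eq_extremum)
        ultimately show ?thesis using Nr0 by (simp add: ennreal_le_iff)
      qed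
      have aS: "a n \<le> s + Nr + exp (- real n)" for n
      proof -
        have "integral\<^sup>L \<pi> (g n) = a n - integral\<^sup>L \<pi> (q n)"
          unfolding a_def gpq[abs_def] using intp intq by (rule Bochner_Integration.integral_diff)
        then show ?thesis using gS[of n] qN[of n] by linarith
      qed
      have amono: "a m \<le> a n" if "m \<le> n" for m n
        unfolding a_def using intp that by (intro integral_mono) (auto simp: p_def)
      have abound: "a m \<le> s + Nr" for m
      proof -
        have lim: "(\<lambda>n. s + Nr + 1 / real (Suc n)) \<longlonglongrightarrow> s + Nr + 0"
          by (intro tendsto_intros LIMSEQ_inverse_real_of_nat[unfolded inverse_eq_divide])
        have ex: "exp (- real n) \<le> 1 / real (Suc n)" for n
        proof -
          have "1 + real n \<le> exp (real n)" by (rule exp_ge_add_one_self)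
          then have "1 / exp (real n) \<le> 1 / (1 + real n)" by (intro divide_left_mono) auto
          then show ?thesis by (simp add: exp_minus inverse_eq_divide)
        qed
        have "a m \<le> s + Nr + 0"
        proof (rule LIMSEQ_le_const[OF lim], intro exI allI impI)
          fix n assume "m \<le> n"
          then show "a m \<le> s + Nr + 1 / real (Suc n)" using amono[of m n] aS[of n] ex[of n] by linarith
        qed
        then show ?thesis by simp
      qed
      have Pp_eq: "Pp = (SUP n. ennreal (a n))"
      proof -
        have sup: "ennreal (c z) = (SUP n. ennreal (p n z))" for z
        proof (rule antisym)
          obtain n :: nat where n: "max 0 (c z) \<le> real n" using real_arch_simple by blast
          have "ennreal (c z) = ennreal (p n z)" unfolding p_def using n
            by (cases "c z \<ge> 0") (auto simp: ennreal_neg)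
          then show "ennreal (c z) \<le> (SUP n. ennreal (p n z))" by (metis SUP_upper UNIV_I)
          show "(SUP n. ennreal (p n z)) \<le> ennreal (c z)"
          proof (intro SUP_least)
            fix n show "ennreal (p n z) \<le> ennreal (c z)"
            proof (cases "c z \<ge> 0")
              case True then show ?thesis unfolding p_def by (intro ennreal_leI) auto
            next
              case False then show ?thesis unfolding p_def by (simp add: ennreal_neg)
            qed
          qed
        qed
        have "Pp = (\<integral>\<^sup>+ z. (SUP n. ennreal (p n z)) \<partial>\<pi>)" unfolding Pp_def sup ..
        also have "\<dots> = (SUP n. \<integral>\<^sup>+ z. ennreal (p n z) \<partial>\<pi>)"
        proof (rule nn_integral_monotone_convergence_SUP)
          show "incseq (\<lambda>n z. ennreal (p n z))"
            by (auto simp: incseq_def le_fun_def p_def intro!: ennreal_leI)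
          show "(\<lambda>z. ennreal (p n z)) \<in> borel_measurable \<pi>" for n
            using bb_integrable[OF fm sp pbb[of n]] by auto
        qed
        also have "\<dots> = (SUP n. ennreal (a n))" unfolding a_def
        proof (intro SUP_cong refl nn_integral_eq_integral)
          fix n show "integrable \<pi> (p n)" by (rule intp)
          show "AE z in \<pi>. 0 \<le> p n z" unfolding p_def by auto
        qed
        finally show ?thesis .
      qed
      have "Pp \<le> ennreal (s + Nr)" unfolding Pp_eq
        using abound by (intro SUP_least ennreal_leI) auto
      then have Pfin: "Pp \<noteq> \<infinity>" using ennreal_less_top[of "s + Nr"] by (auto simp: top_unique)
      have "Pp = ennreal (enn2real Pp)" using Pfin by (simp add: top.not_eq_extremum)
      then have "ennreal (enn2real Pp) \<le> ennreal (s + Nr)" using \<open>Pp \<le> ennreal (s + Nr)\<close> by simp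
      moreover have "0 \<le> s + Nr" using s0 Nr0 by simp
      ultimately have "enn2real Pp \<le> s + Nr" by (simp only: ennreal_le_iff)
      then have "ereal (enn2real Pp) - ereal Nr \<le> ereal s" by simp
      then show ?thesis unfolding ext s using Pfin Nfin by (simp add: enn2ereal_fin Nr_def)
    qed
  qed
qed

end

theorem mainTheorem7:
  fixes \<nu> :: "'a::metric_space measure" and \<pi> :: "('a \<times> 'b::metric_space) measure"
  assumes "compact (UNIV :: 'a set)" and "compact (UNIV :: 'b set)"
    and "sets \<nu> = sets borel" and "prob_space \<nu>"
    and "sets \<pi> = sets borel" and "prob_space \<pi>"
  shows "H_nu \<nu> \<pi> = - (SUP f \<in> {f :: 'a \<times> 'b \<Rightarrow> real. (\<exists>L. L-lipschitz_on UNIV f) \<and>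
            (\<forall>y. (\<integral>\<^sup>+ x. ennreal (exp (f (x, y))) \<partial>\<nu>) = 1)}. ereal (integral\<^sup>L \<pi> f))"
proof -
  interpret mctx \<nu> \<pi> using assms by (simp add: mctx_def)
  define MS where "MS = {c \<in> wd_functions \<pi>. \<forall>y. (\<integral>\<^sup>+ x. ennreal (exp (c (x, y))) \<partial>\<nu>) = 1}"
  have eq: "(SUP c \<in> MS. ext_integral \<pi> c) = S"
  proof (rule antisym)
    show "(SUP c \<in> MS. ext_integral \<pi> c) \<le> S"
      unfolding MS_def by (intro SUP_least trunc) auto
    show "S \<le> (SUP c \<in> MS. ext_integral \<pi> c)"
      unfolding S_def
    proof (intro SUP_least)
      fix f assume f: "f \<in> LS"
      have int: "integrable \<pi> f" using bb_integrable[OF fm sp lipb_bb[OF LS_lipb[OF f]]] .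
      have "f \<in> MS" unfolding MS_def using integrable_wd[OF int] f unfolding LS_def by auto
      then have "ext_integral \<pi> f \<le> (SUP c \<in> MS. ext_integral \<pi> c)" by (rule SUP_upper)
      then show "ereal (integral\<^sup>L \<pi> f) \<le> (SUP c \<in> MS. ext_integral \<pi> c)"
        using ext_integral_integrable[OF int] by simp
    qed
  qed
  show ?thesis unfolding H_nu_def MS_def[symmetric] eq S_def LS_def ..
qed

end
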